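(* Let $k$ be a positive integer and let $T$ be a tournament on $n$ vertices with $n \geq (2k-1)2^{2k}$. Then $\mathrm{sinv}'_k(T) \leq \mathrm{sinv}_k(T) \leq 1$.
   Context: A tournament is an orientation of a complete graph. For a digraph $D$ and $X \subseteq V(D)$, inverting $X$ means reversing the direction of every arc of $D$ with both endvertices in $X$. A digraph $D$ is $k$-arc-strong if for every partition $(V_1,V_2)$ of $V(D)$ into nonempty sets there are at least $k$ arcs from $V_1$ to $V_2$; it is $k$-strong if $|V(D)|\ge k+1$ and $D-S$ is strongly connected for every $S\subseteq V(D)$ with $|S|<k$. $\mathrm{sinv}'_k(D)$ (resp. $\mathrm{sinv}_k(D)$) is the minimum number of sets whose successive inversion transforms $D$ into a $k$-arc-strong (resp. $k$-strong) digraph. *)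

theory Defs
  imports Main "HOL-Library.Extended_Nat"
begin

definition tournament :: "'a set \<Rightarrow> ('a \<times> 'a) set \<Rightarrow> bool" where
  "tournament V A \<longleftrightarrow> finite V \<and> A \<subseteq> V \<times> V \<and> (\<forall>v. (v, v) \<notin> A) \<and>
     (\<forall>u\<in>V. \<forall>v\<in>V. u \<noteq> v \<longrightarrow> ((u, v) \<in> A \<longleftrightarrow> (v, u) \<notin> A))"

definition invert :: "'a set \<Rightarrow> ('a \<times> 'a) set \<Rightarrow> ('a \<times> 'a) set" where
  "invert X A = {(u, v). (u, v) \<in> A \<and> \<not> (u \<in> X \<and> v \<in> X)} \<union>
                {(v, u) | u v. (u, v) \<in> A \<and> u \<in> X \<and> v \<in> X}"

definition invert_seq :: "'a set list \<Rightarrow> ('a \<times> 'a) set \<Rightarrow> ('a \<times> 'a) set" where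
  "invert_seq Xs A = foldl (\<lambda>B X. invert X B) A Xs"

definition strongly_connected :: "'a set \<Rightarrow> ('a \<times> 'a) set \<Rightarrow> bool" where
  "strongly_connected V A \<longleftrightarrow> (\<forall>u\<in>V. \<forall>v\<in>V. (u, v) \<in> (A \<inter> (V \<times> V))\<^sup>*)"

definition k_arc_strong :: "nat \<Rightarrow> 'a set \<Rightarrow> ('a \<times> 'a) set \<Rightarrow> bool" where
  "k_arc_strong k V A \<longleftrightarrow>
     (\<forall>V1. V1 \<subseteq> V \<and> V1 \<noteq> {} \<and> V1 \<noteq> V \<longrightarrow>
        card {(u, v) \<in> A. u \<in> V1 \<and> v \<in> V - V1} \<ge> k)"

definition k_strong :: "nat \<Rightarrow> 'a set \<Rightarrow> ('a \<times> 'a) set \<Rightarrow> bool" where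
  "k_strong k V A \<longleftrightarrow> card V \<ge> k + 1 \<and>
     (\<forall>S. S \<subseteq> V \<and> card S < k \<longrightarrow>
        strongly_connected (V - S) (A \<inter> ((V - S) \<times> (V - S))))"

text \<open>Minimum number of sets whose successive inversion yields a k-arc-strong
  (resp. k-strong) digraph; \<infinity> if impossible.\<close>
definition sinv_arc :: "nat \<Rightarrow> 'a set \<Rightarrow> ('a \<times> 'a) set \<Rightarrow> enat" where
  "sinv_arc k V A = (INF Xs \<in> {Xs. (\<forall>X\<in>set Xs. X \<subseteq> V) \<and> k_arc_strong k V (invert_seq Xs A)}.
                       enat (length Xs))"

definition sinv :: "nat \<Rightarrow> 'a set \<Rightarrow> ('a \<times> 'a) set \<Rightarrow> enat" where
  "sinv k V A = (INF Xs \<in> {Xs. (\<forall>X\<in>set Xs. X \<subseteq> V) \<and> k_strong k V (invert_seq Xs A)}.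
                       enat (length Xs))"

end

theory Submission
  imports Defs
begin

lemma card_filter_sum: "finite U \<Longrightarrow> card {w\<in>U. P w} = (\<Sum>w\<in>U. if P w then 1 else 0)"
proof -
  assume "finite U"
  have "{w\<in>U. P w} = U \<inter> Collect P" by auto
  then show ?thesis using \<open>finite U\<close> by (simp add: sum.If_cases)
qed

definition tourn_on :: "'a set \<Rightarrow> ('a \<times> 'a) set \<Rightarrow> bool" where
  "tourn_on U E \<longleftrightarrow> (\<forall>u\<in>U. (u,u)\<notin>E) \<and> (\<forall>u\<in>U. \<forall>v\<in>U. u \<noteq> v \<longrightarrow> ((u,v)\<in>E \<longleftrightarrow> (v,u)\<notin>E))"

lemma out_in_card:
  assumes "finite U" "tourn_on U E" "v \<in> U"
  shows "card {w\<in>U. (v,w)\<in>E} + card {w\<in>U. (w,v)\<in>E} = card U - 1"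
proof -
  have d: "{w\<in>U. (v,w)\<in>E} \<inter> {w\<in>U. (w,v)\<in>E} = {}"
    using assms(2,3) unfolding tourn_on_def by (auto; metis)
  have u: "{w\<in>U. (v,w)\<in>E} \<union> {w\<in>U. (w,v)\<in>E} = U - {v}"
    using assms(2,3) unfolding tourn_on_def by auto
  have "card ({w\<in>U. (v,w)\<in>E} \<union> {w\<in>U. (w,v)\<in>E}) = card {w\<in>U. (v,w)\<in>E} + card {w\<in>U. (w,v)\<in>E}"
    by (rule card_Un_disjoint) (use assms(1) d in auto)
  then show ?thesis using u assms by simp
qed

lemma sum_out_in:
  assumes "finite U"
  shows "(\<Sum>v\<in>U. card {w\<in>U. (v,w)\<in>E}) = (\<Sum>v\<in>U. card {w\<in>U. (w,v)\<in>E})"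
proof -
  have "(\<Sum>v\<in>U. card {w\<in>U. (v,w)\<in>E}) = (\<Sum>v\<in>U. \<Sum>w\<in>U. if (v,w)\<in>E then 1 else 0)"
    using assms by (simp add: card_filter_sum)
  also have "\<dots> = (\<Sum>w\<in>U. \<Sum>v\<in>U. if (v,w)\<in>E then 1 else 0)"
    by (rule sum.swap)
  also have "\<dots> = (\<Sum>v\<in>U. card {w\<in>U. (w,v)\<in>E})"
    using assms by (simp add: card_filter_sum)
  finally show ?thesis .
qed

lemma exists_big_out:
  assumes "finite U" "tourn_on U E" "U \<noteq> {}"
  shows "\<exists>v\<in>U. card U \<le> 2 * card {w\<in>U. (v,w)\<in>E} + 1"
proof (rule ccontr)
  assume "\<not> ?thesis"
  then have h: "\<forall>v\<in>U. 2 * card {w\<in>U. (v,w)\<in>E} + 2 \<le> card U" by auto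
  define N where "N = card U"
  have "(\<Sum>v\<in>U. 2 * card {w\<in>U. (v,w)\<in>E} + 2) \<le> (\<Sum>v\<in>U. N)"
    by (rule sum_mono) (use h N_def in auto)
  moreover have "(\<Sum>v\<in>U. 2 * card {w\<in>U. (v,w)\<in>E} + 2) = 2 * (\<Sum>v\<in>U. card {w\<in>U. (v,w)\<in>E}) + 2 * N"
    unfolding sum.distrib sum_distrib_left[symmetric] by (simp add: N_def)
  ultimately have a: "2 * (\<Sum>v\<in>U. card {w\<in>U. (v,w)\<in>E}) + 2 * N \<le> N * N"
    by (simp add: N_def)
  have "(\<Sum>v\<in>U. card {w\<in>U. (v,w)\<in>E}) + (\<Sum>v\<in>U. card {w\<in>U. (w,v)\<in>E}) = (\<Sum>v\<in>U. N - 1)"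
    unfolding sum.distrib[symmetric] by (rule sum.cong) (use out_in_card[OF assms(1,2)] N_def in auto)
  then have b: "2 * (\<Sum>v\<in>U. card {w\<in>U. (v,w)\<in>E}) = N * (N - 1)"
    using sum_out_in[OF assms(1), of E] N_def by simp
  have "N \<ge> 1" using assms N_def by (simp add: Suc_leI card_gt_0_iff)
  then obtain m where "N = Suc m" by (cases N) auto
  then show False using a b by simp
qed

lemma extract_lem:
  assumes "tourn_on V E"
  shows "\<forall>U. U \<subseteq> V \<longrightarrow> finite U \<longrightarrow> 2^j \<le> card U \<longrightarrow>
     (\<exists>P U'. P \<subseteq> U \<and> U' \<subseteq> U - P \<and> card P = j \<and> (\<forall>p\<in>P. \<forall>w\<in>U'. (p,w)\<in>E) \<and>
        card U + 1 \<le> 2^j * (card U' + 1))"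
proof (induction j)
  case 0
  show ?case
  proof (intro allI impI)
    fix U :: "'a set" assume "U \<subseteq> V" "finite U"
    show "\<exists>P U'. P \<subseteq> U \<and> U' \<subseteq> U - P \<and> card P = 0 \<and> (\<forall>p\<in>P. \<forall>w\<in>U'. (p,w)\<in>E) \<and>
        card U + 1 \<le> 2^0 * (card U' + 1)"
      by (rule exI[of _ "{}"], rule exI[of _ U]) simp
  qed
next
  case (Suc j)
  show ?case
  proof (intro allI impI)
    fix U assume U: "U \<subseteq> V" "finite U" "2^Suc j \<le> card U"
    have tU: "tourn_on U E" using assms U(1) unfolding tourn_on_def by blast
    have "U \<noteq> {}" using U by auto
    then obtain v where v: "v \<in> U" "card U \<le> 2 * card {w\<in>U. (v,w)\<in>E} + 1"
      using exists_big_out[OF U(2) tU] by blast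
    define Ov where "Ov = {w\<in>U. (v,w)\<in>E}"
    have fOv: "finite Ov" using U Ov_def by auto
    have cOv: "2^j \<le> card Ov" using U(3) v(2) Ov_def by simp
    obtain P U' where P: "P \<subseteq> Ov" "U' \<subseteq> Ov - P" "card P = j" "\<forall>p\<in>P. \<forall>w\<in>U'. (p,w)\<in>E"
        "card Ov + 1 \<le> 2^j * (card U' + 1)"
      using Suc.IH[rule_format, of Ov] fOv cOv U Ov_def by blast
    have vOv: "v \<notin> Ov" using tU v Ov_def unfolding tourn_on_def by auto
    have fP: "finite P" using P(1) fOv finite_subset by blast
    show "\<exists>P U'. P \<subseteq> U \<and> U' \<subseteq> U - P \<and> card P = Suc j \<and> (\<forall>p\<in>P. \<forall>w\<in>U'. (p,w)\<in>E) \<and>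
        card U + 1 \<le> 2^Suc j * (card U' + 1)"
    proof (intro exI conjI)
      show "insert v P \<subseteq> U" using P(1) v Ov_def by auto
      show "U' \<subseteq> U - insert v P" using P(1,2) vOv Ov_def by auto
      have "v \<notin> P" using P(1) vOv by auto
      then show "card (insert v P) = Suc j" using fP P(3) by simp
      show "\<forall>p\<in>insert v P. \<forall>w\<in>U'. (p,w)\<in>E" using P(2,4) Ov_def by auto
      show "card U + 1 \<le> 2^Suc j * (card U' + 1)" using P(5) v(2) Ov_def by simp
    qed
  qed
qed


lemma rtrancl_cross: "(x,y) \<in> R\<^sup>* \<Longrightarrow> x \<in> P \<Longrightarrow> y \<notin> P \<Longrightarrow> \<exists>u w. (u,w) \<in> R \<and> u \<in> P \<and> w \<notin> P"
  by (induction rule: rtrancl_induct) auto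

lemma strong_imp_arc:
  assumes ks: "k_strong k V B"
  shows "k_arc_strong k V B"
  unfolding k_arc_strong_def
proof (intro allI impI)
  fix V1 assume V1: "V1 \<subseteq> V \<and> V1 \<noteq> {} \<and> V1 \<noteq> V"
  define F where "F = {(u, v) \<in> B. u \<in> V1 \<and> v \<in> V - V1}"
  have cV: "card V \<ge> k + 1" and sc: "\<And>S. S \<subseteq> V \<Longrightarrow> card S < k \<Longrightarrow>
        strongly_connected (V - S) (B \<inter> ((V - S) \<times> (V - S)))"
    using ks unfolding k_strong_def by auto
  have fV: "finite V" using cV card.infinite by fastforce
  have "F \<subseteq> V \<times> V" using F_def V1 by auto
  then have fF: "finite F" using fV finite_subset by blast
  show "k \<le> card F"
  proof (rule ccontr)
    assume "\<not> k \<le> card F"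
    then have cF: "card F < k" by simp
    show False
    proof (cases "V1 \<subseteq> fst ` F")
      case False
      then obtain x where x: "x \<in> V1" "x \<notin> fst ` F" by auto
      obtain y where y: "y \<in> V" "y \<notin> V1" using V1 by auto
      define S where "S = fst ` F"
      have SV: "S \<subseteq> V1" using S_def F_def by auto
      have "card S \<le> card F" using S_def fF card_image_le by blast
      then have "strongly_connected (V - S) (B \<inter> ((V - S) \<times> (V - S)))"
        using sc SV V1 cF by auto
      then have "(x, y) \<in> (B \<inter> ((V - S) \<times> (V - S)) \<inter> ((V - S) \<times> (V - S)))\<^sup>*"
      proof -
        have "x \<in> V - S" using x S_def V1 by auto
        moreover have "y \<in> V - S" using y SV by auto
        ultimately show ?thesis using \<open>strongly_connected (V - S) (B \<inter> ((V - S) \<times> (V - S)))\<close>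
          unfolding strongly_connected_def by blast
      qed
      then obtain u w where uw: "(u,w) \<in> B \<inter> ((V - S) \<times> (V - S)) \<inter> ((V - S) \<times> (V - S))"
          "u \<in> V1" "w \<notin> V1"
        using rtrancl_cross[of x y _ V1] x y by blast
      then have "(u,w) \<in> F" using F_def by auto
      then have "u \<in> S" using S_def by force
      then show False using uw by auto
    next
      case True
      obtain x where x: "x \<in> V1" using V1 by auto
      define Fx where "Fx = {e \<in> F. fst e = x}"
      define S where "S = (V1 - {x}) \<union> snd ` Fx"
      have "V1 - {x} \<subseteq> fst ` (F - Fx)"
      proof
        fix u assume u: "u \<in> V1 - {x}"
        then obtain e where "e \<in> F" "fst e = u" using True by force
        then show "u \<in> fst ` (F - Fx)" using u Fx_def by auto
      qed
      then have c1: "card (V1 - {x}) \<le> card (F - Fx)"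
        using fF by (meson card_image_le finite_Diff card_mono finite_imageI le_trans)
      have c2: "card (snd ` Fx) \<le> card Fx" using fF Fx_def by (auto intro: card_image_le)
      have c3: "card F = card (F - Fx) + card Fx"
        using fF Fx_def by (metis (no_types, lifting) card_Diff_subset card_mono diff_add_inverse2
            finite_subset le_add_diff_inverse2 mem_Collect_eq subsetI)
      have "card S \<le> card (V1 - {x}) + card (snd ` Fx)"
        unfolding S_def by (rule card_Un_le)
      then have cS: "card S < k" using c1 c2 c3 cF by linarith
      have SV: "S \<subseteq> V" using S_def V1 F_def Fx_def by auto
      have fS: "finite S" using SV fV finite_subset by blast
      have xS: "x \<notin> S" using S_def Fx_def F_def x by auto
      have "card (V - S) = card V - card S" using SV fS by (simp add: card_Diff_subset)
      then have "card (V - S) \<ge> 2" using cV cS by linarith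
      have "\<not> (V - S \<subseteq> {x})"
      proof
        assume "V - S \<subseteq> {x}"
        then have "card (V - S) \<le> card {x}" by (intro card_mono) auto
        then show False using \<open>card (V - S) \<ge> 2\<close> by simp
      qed
      then obtain z where z: "z \<in> V - S" "z \<noteq> x" by auto
      have "strongly_connected (V - S) (B \<inter> ((V - S) \<times> (V - S)))" using sc SV cS by auto
      then have "(x, z) \<in> (B \<inter> ((V - S) \<times> (V - S)) \<inter> ((V - S) \<times> (V - S)))\<^sup>*"
      proof -
        have "x \<in> V - S" using x xS V1 by auto
        then show ?thesis using z \<open>strongly_connected (V - S) (B \<inter> ((V - S) \<times> (V - S)))\<close>
          unfolding strongly_connected_def by blast
      qed
      then obtain u w where uw: "(u,w) \<in> B \<inter> ((V - S) \<times> (V - S)) \<inter> ((V - S) \<times> (V - S))"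
          "u \<in> {x}" "w \<notin> {x}"
        using rtrancl_cross[of x z _ "{x}"] z by blast
      show False
      proof (cases "w \<in> V1")
        case True
        then show False using uw S_def by auto
      next
        case False
        then have "(x, w) \<in> Fx" using uw F_def Fx_def x by auto
        then have "w \<in> S" using S_def by force
        then show False using uw by auto
      qed
    qed
  qed
qed


lemma in_invert: "(a,b) \<in> invert X A \<longleftrightarrow> (if a \<in> X \<and> b \<in> X then (b,a) \<in> A else (a,b) \<in> A)"
  unfolding invert_def by auto

lemma out_in_compl:
  assumes "finite Y" "tourn_on V E" "Y \<subseteq> V" "x \<in> V" "x \<notin> Y"
  shows "card {w\<in>Y. (x,w)\<in>E} + card {w\<in>Y. (w,x)\<in>E} = card Y"
proof -
  have T: "\<And>w. w \<in> Y \<Longrightarrow> (x,w) \<in> E \<longleftrightarrow> (w,x) \<notin> E"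
  proof -
    fix w assume "w \<in> Y"
    then have "w \<in> V" "w \<noteq> x" using assms(3,5) by auto
    then show "(x,w) \<in> E \<longleftrightarrow> (w,x) \<notin> E" using assms(2,4) unfolding tourn_on_def by blast
  qed
  have d: "{w\<in>Y. (x,w)\<in>E} \<inter> {w\<in>Y. (w,x)\<in>E} = {}"
    using T by auto
  have u: "{w\<in>Y. (x,w)\<in>E} \<union> {w\<in>Y. (w,x)\<in>E} = Y"
    using T by auto
  have "card ({w\<in>Y. (x,w)\<in>E} \<union> {w\<in>Y. (w,x)\<in>E}) = card {w\<in>Y. (x,w)\<in>E} + card {w\<in>Y. (w,x)\<in>E}"
    by (rule card_Un_disjoint) (use assms(1) d in auto)
  then show ?thesis using u by simp
qed

lemma avoid: "finite S \<Longrightarrow> card S < k \<Longrightarrow> k \<le> card Z \<Longrightarrow> finite Z \<Longrightarrow> \<exists>w\<in>Z. w \<notin> S"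
proof (rule ccontr)
  assume a: "finite S" "card S < k" "k \<le> card Z" "finite Z" "\<not> (\<exists>w\<in>Z. w \<notin> S)"
  then have "Z \<subseteq> S" by auto
  then have "card Z \<le> card S" using a(1) by (rule card_mono[rotated])
  then show False using a by simp
qed

lemma tourn_tourn_on: "tournament V A \<Longrightarrow> tourn_on V A"
  unfolding tournament_def tourn_on_def by blast

lemma tourn_on_conv: "tourn_on V A \<Longrightarrow> tourn_on V (A\<inverse>)"
  unfolding tourn_on_def by blast


lemma arith_bad:
  fixes a c b k :: nat
  assumes "a \<le> 2*k" "c \<le> b" "2*k - 1 \<le> b" "k > 0"
    "\<not> (k \<le> a + c \<and> k \<le> (2*k - a) + (b - c))"
  shows "k \<le> (2*k - a) + c \<and> k \<le> a + (b - c)"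
proof -
  have "int k \<le> (2*int k - int a) + int c \<and> int k \<le> int a + (int b - int c)"
    using assms by (simp add: of_nat_diff) linarith
  then show ?thesis using assms by linarith
qed


lemma main_construct:
  fixes k :: nat
  assumes k: "k > 0" and T: "tournament V A" and n: "card V \<ge> (2 * k - 1) * 2 ^ (2 * k)"
  shows "\<exists>X. X \<subseteq> V \<and> k_strong k V (invert X A)"
proof -
  have fV: "finite V" using T unfolding tournament_def by auto
  have AV: "A \<subseteq> V \<times> V" using T unfolding tournament_def by auto
  have tV: "tourn_on V A" using T by (rule tourn_tourn_on)
  have tVc: "tourn_on V (A\<inverse>)" using tV by (rule tourn_on_conv)
  have p2: "(2::nat) ^ (2 * k) = 2^k * 2^k" by (simp add: power_add mult_2)
  have k1: "1 \<le> 2 * k - 1" using k by simp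
  have pp: "(2::nat)^k \<le> 2^(2*k)" by (rule power_increasing) simp_all
  have "1 * (2::nat)^(2*k) \<le> (2 * k - 1) * 2 ^ (2 * k)" using k1 by (rule mult_le_mono1)
  then have pk: "(2::nat)^k \<le> (2 * k - 1) * 2 ^ (2 * k)" using pp by linarith
  have "2^k \<le> (2 * k - 1) * 2 ^ (2 * k)" by (rule pk)
  then have "2^k \<le> card V" using n by linarith
  then obtain P U1 where P: "P \<subseteq> V" "U1 \<subseteq> V - P" "card P = k" "\<forall>p\<in>P. \<forall>w\<in>U1. (p,w)\<in>A"
      "card V + 1 \<le> 2^k * (card U1 + 1)"
    using extract_lem[OF tV, of k, rule_format, of V] fV by auto
  have fU1: "finite U1" using P(2) fV finite_subset by blast
  have h1: "2^k * ((2 * k - 1) * 2^k) < 2^k * (card U1 + 1)"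
  proof -
    have "2^k * ((2 * k - 1) * 2^k) = (2 * k - 1) * 2 ^ (2 * k)" using p2 by (simp add: mult_ac)
    then show ?thesis using n P(5) by linarith
  qed
  then have "(2 * k - 1) * 2^k < card U1 + 1" by (simp only: mult_less_cancel1)
  moreover have "1 * (2::nat)^k \<le> (2 * k - 1) * 2^k" using k1 by (rule mult_le_mono1)
  ultimately have "2^k \<le> card U1" by linarith
  then obtain Nn R where N: "Nn \<subseteq> U1" "R \<subseteq> U1 - Nn" "card Nn = k" "\<forall>p\<in>Nn. \<forall>w\<in>R. (p,w)\<in>A\<inverse>"
      "card U1 + 1 \<le> 2^k * (card R + 1)"
    using extract_lem[OF tVc, of k, rule_format, of U1] fU1 P(2) by auto
  have "(2 * k - 1) * (2^k * 2^k) < 2^k * (2^k * (card R + 1))"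
  proof -
    have "(2 * k - 1) * (2^k * 2^k) < card V + 1" using n p2 by simp
    also have "\<dots> \<le> 2^k * (card U1 + 1)" by (rule P(5))
    also have "\<dots> \<le> 2^k * (2^k * (card R + 1))" using N(5) by (rule mult_le_mono2)
    finally show ?thesis .
  qed
  then have "(2^k * 2^k) * (2 * k - 1) < (2^k * 2^k) * (card R + 1)" by (simp only: mult_ac)
  then have "2 * k - 1 < card R + 1" by (simp only: mult_less_cancel1)
  then have cR: "2 * k - 1 \<le> card R" by simp
  define Q where "Q = P \<union> Nn"
  define W where "W = Q \<union> R"
  have fR: "finite R" using N(2) fU1 finite_subset by blast
  have fP: "finite P" using P(1) fV finite_subset by blast
  have fN: "finite Nn" using N(1) fU1 finite_subset by blast
  have fQ: "finite Q" using fP fN Q_def by auto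
  have dPN: "P \<inter> Nn = {}" using P(2) N(1) by auto
  have dQR: "Q \<inter> R = {}" using P(2) N(1,2) Q_def by auto
  have cQ: "card Q = 2 * k" using card_Un_disjoint[OF fP fN dPN] P(3) N(3) Q_def by simp
  have QV: "Q \<subseteq> V" using P N Q_def by auto
  have RV: "R \<subseteq> V" using P N by auto
  have WV: "W \<subseteq> V" using QV RV W_def by auto
  have arcPR: "\<And>p r. p \<in> P \<Longrightarrow> r \<in> R \<Longrightarrow> (p,r) \<in> A" using P(4) N(2) by auto
  have arcPN: "\<And>p m. p \<in> P \<Longrightarrow> m \<in> Nn \<Longrightarrow> (p,m) \<in> A" using P(4) N(1) by auto
  have arcRN: "\<And>r m. r \<in> R \<Longrightarrow> m \<in> Nn \<Longrightarrow> (r,m) \<in> A" using N(4) by auto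
  define good where "good x \<longleftrightarrow> k \<le> card {w\<in>W. (x,w)\<in>A} \<and> k \<le> card {w\<in>W. (w,x)\<in>A}" for x
  define X where "X = Q \<union> {x \<in> V - W. \<not> good x}"
  define A' where "A' = invert X A"
  have XV: "X \<subseteq> V" using X_def QV by auto
  have RX: "R \<inter> X = {}" using dQR X_def W_def by auto
  have iA: "\<And>a b. (a,b) \<in> A' \<longleftrightarrow> (if a \<in> X \<and> b \<in> X then (b,a) \<in> A else (a,b) \<in> A)"
    unfolding A'_def by (rule in_invert)
  have aPR: "\<And>p r. p \<in> P \<Longrightarrow> r \<in> R \<Longrightarrow> (p,r) \<in> A'" using iA arcPR RX by auto
  have aRN: "\<And>r m. r \<in> R \<Longrightarrow> m \<in> Nn \<Longrightarrow> (r,m) \<in> A'" using iA arcRN RX by auto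
  have aNP: "\<And>m p. m \<in> Nn \<Longrightarrow> p \<in> P \<Longrightarrow> (m,p) \<in> A'" using iA arcPN X_def Q_def by auto
  have deg: "k \<le> card {w\<in>W. (x,w)\<in>A'} \<and> k \<le> card {w\<in>W. (w,x)\<in>A'}" if x: "x \<in> V" "x \<notin> W" for x
  proof -
    define a where "a = card {w\<in>Q. (x,w)\<in>A}"
    define a' where "a' = card {w\<in>Q. (w,x)\<in>A}"
    define c where "c = card {w\<in>R. (x,w)\<in>A}"
    define c' where "c' = card {w\<in>R. (w,x)\<in>A}"
    have xQ: "x \<notin> Q" "x \<notin> R" using x W_def by auto
    have aa: "a + a' = 2 * k" using out_in_compl[OF fQ tV QV x(1) xQ(1)] cQ a_def a'_def by simp
    have cc: "c + c' = card R" using out_in_compl[OF fR tV RV x(1) xQ(2)] c_def c'_def by simp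
    have split: "\<And>Z. card {w\<in>W. Z w} = card {w\<in>Q. Z w} + card {w\<in>R. Z w}"
    proof -
      fix Z
      have "{w\<in>W. Z w} = {w\<in>Q. Z w} \<union> {w\<in>R. Z w}" using W_def by auto
      moreover have "card ({w\<in>Q. Z w} \<union> {w\<in>R. Z w}) = card {w\<in>Q. Z w} + card {w\<in>R. Z w}"
        by (rule card_Un_disjoint) (use fQ fR dQR in auto)
      ultimately show "card {w\<in>W. Z w} = card {w\<in>Q. Z w} + card {w\<in>R. Z w}" by simp
    qed
    have oW: "card {w\<in>W. (x,w)\<in>A} = a + c" using split a_def c_def by simp
    have iW: "card {w\<in>W. (w,x)\<in>A} = a' + c'" using split a'_def c'_def by simp
    show ?thesis
    proof (cases "good x")
      case True
      then have "x \<notin> X" using X_def xQ x by auto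
      then have e1: "{w\<in>W. (x,w)\<in>A'} = {w\<in>W. (x,w)\<in>A}" and e2: "{w\<in>W. (w,x)\<in>A'} = {w\<in>W. (w,x)\<in>A}"
        using iA by auto
      show ?thesis using True e1 e2 good_def by simp
    next
      case False
      then have xX: "x \<in> X" using X_def x by auto
      have e1: "{w\<in>Q. (x,w)\<in>A'} = {w\<in>Q. (w,x)\<in>A}" using iA xX X_def by auto
      have e2: "{w\<in>R. (x,w)\<in>A'} = {w\<in>R. (x,w)\<in>A}" using iA RX by auto
      have e3: "{w\<in>Q. (w,x)\<in>A'} = {w\<in>Q. (x,w)\<in>A}" using iA xX X_def by auto
      have e4: "{w\<in>R. (w,x)\<in>A'} = {w\<in>R. (w,x)\<in>A}" using iA RX by auto
      have o': "card {w\<in>W. (x,w)\<in>A'} = a' + c" using split[of "\<lambda>w. (x,w)\<in>A'"] e1 e2 a'_def c_def by simp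
      have i': "card {w\<in>W. (w,x)\<in>A'} = a + c'" using split[of "\<lambda>w. (w,x)\<in>A'"] e3 e4 a_def c'_def by simp
      have nb: "\<not> (k \<le> a + c \<and> k \<le> (2*k - a) + (card R - c))"
      proof -
        have "a' = 2*k - a" "c' = card R - c" using aa cc by auto
        then show ?thesis using False good_def oW iW by simp
      qed
      have "k \<le> (2*k - a) + c \<and> k \<le> a + (card R - c)"
        by (rule arith_bad[OF _ _ cR k nb]) (use aa cc in linarith)+
      moreover have "a' = 2*k - a" "c' = card R - c" using aa cc by auto
      ultimately show ?thesis using o' i' by simp
    qed
  qed
  have "k_strong k V A'"
    unfolding k_strong_def
  proof (intro conjI allI impI)
    have "k < 2^k" by (rule less_exp)
    also have "(2::nat)^k \<le> (2 * k - 1) * 2 ^ (2 * k)" by (rule pk)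
    finally show "k + 1 \<le> card V" using n by linarith
  next
    fix S assume S: "S \<subseteq> V \<and> card S < k"
    have fS: "finite S" using S fV finite_subset by blast
    define E where "E = A' \<inter> ((V - S) \<times> (V - S)) \<inter> ((V - S) \<times> (V - S))"
    have inE: "\<And>a b. a \<in> V - S \<Longrightarrow> b \<in> V - S \<Longrightarrow> (a,b) \<in> A' \<Longrightarrow> (a,b) \<in> E\<^sup>*"
      unfolding E_def by auto
    obtain p0 where p0: "p0 \<in> P" "p0 \<notin> S" using avoid[OF fS _ _ fP] S P(3) by auto
    have "k \<le> card R" using cR k by linarith
    then obtain r0 where r0: "r0 \<in> R" "r0 \<notin> S" using avoid[OF fS _ _ fR] S by blast
    obtain m0 where m0: "m0 \<in> Nn" "m0 \<notin> S" using avoid[OF fS _ _ fN] S N(3) by auto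
    have p0V: "p0 \<in> V - S" and r0V: "r0 \<in> V - S" and m0V: "m0 \<in> V - S"
      using p0 r0 m0 QV RV Q_def by auto
    have r_p: "(r0, p0) \<in> E\<^sup>*" using inE[OF r0V m0V aRN[OF r0(1) m0(1)]] inE[OF m0V p0V aNP[OF m0(1) p0(1)]] by auto
    have p_r: "(p0, r0) \<in> E\<^sup>*" using inE[OF p0V r0V aPR[OF p0(1) r0(1)]] .
    have hubW: "(x, p0) \<in> E\<^sup>* \<and> (p0, x) \<in> E\<^sup>*" if x: "x \<in> W - S" for x
    proof -
      have xV: "x \<in> V - S" using x WV by auto
      consider "x \<in> P" | "x \<in> R" | "x \<in> Nn" using x W_def Q_def by auto
      then show ?thesis
      proof cases
        case 1
        have "(x, r0) \<in> E\<^sup>*" using inE[OF xV r0V aPR[OF 1 r0(1)]] .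
        moreover have "(m0, x) \<in> E\<^sup>*" using inE[OF m0V xV aNP[OF m0(1) 1]] .
        moreover have "(p0, m0) \<in> E\<^sup>*" using p_r inE[OF r0V m0V aRN[OF r0(1) m0(1)]] by auto
        ultimately show ?thesis using r_p by (meson rtrancl_trans)
      next
        case 2
        have "(x, p0) \<in> E\<^sup>*" using inE[OF xV m0V aRN[OF 2 m0(1)]] inE[OF m0V p0V aNP[OF m0(1) p0(1)]] by auto
        moreover have "(p0, x) \<in> E\<^sup>*" using inE[OF p0V xV aPR[OF p0(1) 2]] .
        ultimately show ?thesis by blast
      next
        case 3
        have "(x, p0) \<in> E\<^sup>*" using inE[OF xV p0V aNP[OF 3 p0(1)]] .
        moreover have "(p0, x) \<in> E\<^sup>*" using p_r inE[OF r0V xV aRN[OF r0(1) 3]] by auto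
        ultimately show ?thesis by blast
      qed
    qed
    have hub: "(x, p0) \<in> E\<^sup>* \<and> (p0, x) \<in> E\<^sup>*" if x: "x \<in> V - S" for x
    proof (cases "x \<in> W")
      case True
      then show ?thesis using hubW x by auto
    next
      case False
      have fW: "finite W" using WV fV finite_subset by blast
      have d: "k \<le> card {w\<in>W. (x,w)\<in>A'}" "k \<le> card {w\<in>W. (w,x)\<in>A'}" using deg[of x] x False by auto
      obtain w1 where w1: "w1 \<in> {w\<in>W. (x,w)\<in>A'}" "w1 \<notin> S"
        using avoid[OF fS _ d(1)] S fW by auto
      obtain w2 where w2: "w2 \<in> {w\<in>W. (w,x)\<in>A'}" "w2 \<notin> S"
        using avoid[OF fS _ d(2)] S fW by auto
      have w1V: "w1 \<in> W - S" "w1 \<in> V - S" and w2V: "w2 \<in> W - S" "w2 \<in> V - S" using w1 w2 WV by auto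
      have "(x, w1) \<in> E\<^sup>*" using inE[OF x w1V(2)] w1 by auto
      moreover have "(w2, x) \<in> E\<^sup>*" using inE[OF w2V(2) x] w2 by auto
      ultimately show ?thesis using hubW[OF w1V(1)] hubW[OF w2V(1)] by (meson rtrancl_trans)
    qed
    show "strongly_connected (V - S) (A' \<inter> ((V - S) \<times> (V - S)))"
      unfolding strongly_connected_def
    proof (intro ballI)
      fix u v assume "u \<in> V - S" "v \<in> V - S"
      then have "(u, v) \<in> E\<^sup>*" using hub by (meson rtrancl_trans)
      then show "(u, v) \<in> (A' \<inter> ((V - S) \<times> (V - S)) \<inter> ((V - S) \<times> (V - S)))\<^sup>*" using E_def by simp
    qed
  qed
  then show ?thesis using XV A'_def by auto
qed


theorem theorem6p1:
  fixes k n :: nat and V :: "'a set" and A :: "('a \<times> 'a) set"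
  assumes "k > 0" and "tournament V A" and "card V = n"
    and "n \<ge> (2 * k - 1) * 2 ^ (2 * k)"
  shows "sinv_arc k V A \<le> sinv k V A \<and> sinv k V A \<le> 1"
proof
  have sub: "{Xs. (\<forall>X\<in>set Xs. X \<subseteq> V) \<and> k_strong k V (invert_seq Xs A)} \<subseteq>
      {Xs. (\<forall>X\<in>set Xs. X \<subseteq> V) \<and> k_arc_strong k V (invert_seq Xs A)}"
    using strong_imp_arc by blast
  show "sinv_arc k V A \<le> sinv k V A"
    unfolding sinv_arc_def sinv_def by (rule INF_superset_mono[OF sub]) simp
next
  obtain X where X: "X \<subseteq> V" "k_strong k V (invert X A)"
    using main_construct[OF assms(1,2)] assms(3,4) by auto
  have "[X] \<in> {Xs. (\<forall>X\<in>set Xs. X \<subseteq> V) \<and> k_strong k V (invert_seq Xs A)}"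
    using X by (simp add: invert_seq_def)
  then have "sinv k V A \<le> enat (length [X])"
    unfolding sinv_def by (rule INF_lower)
  then show "sinv k V A \<le> 1" by (simp add: one_enat_def)
qed

end
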